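(* Let $\alpha\in\mathbb{C}\smallsetminus\{0,1\}$. The irreducible curves of negative self-intersection on $Y_\alpha$ are precisely the exceptional curves $E(0,0)$, $E(1,i)$, $E(\alpha,\alpha i)$, $E(1,-i)$, $E(\alpha,-\alpha i)$ and the strict transforms of the lines $x+iy=0$, $x-iy=0$, $x-z=0$, $(\alpha+1)x+(\alpha-1)iy-2\alpha z=0$, $(\alpha+1)x-(\alpha-1)iy-2\alpha z=0$ and $x-\alpha z=0$.
   Context: $Y_\alpha$ is the blow-up of $\mathbb{P}^2_{\mathbb{C}}$ (coordinates $[x:y:z]$, affine chart $z=1$ with coordinates $(x,y)$) in the five points $(0,0)$, $(1,i)$, $(\alpha,\alpha i)$, $(1,-i)$, $(\alpha,-\alpha i)$; $E(P)$ denotes the exceptional curve over the point $P$. *)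

theory Defs
  imports Complex_Main
begin

text \<open>Plane curves in P^2 over C are given by homogeneous polynomials in x,y,z.
  A polynomial is represented by its coefficient function: f (i,j,k) is the
  coefficient of x^i y^j z^k.\<close>

type_synonym cpoly = "nat \<times> nat \<times> nat \<Rightarrow> complex"

definition homog :: "nat \<Rightarrow> cpoly \<Rightarrow> bool" where
  "homog d f \<longleftrightarrow> (\<forall>i j k. f (i,j,k) \<noteq> 0 \<longrightarrow> i + j + k = d)"

definition pmult :: "cpoly \<Rightarrow> cpoly \<Rightarrow> cpoly" where
  "pmult g h = (\<lambda>(i,j,k). \<Sum>i1\<le>i. \<Sum>j1\<le>j. \<Sum>k1\<le>k.
                   g (i1,j1,k1) * h (i - i1, j - j1, k - k1))"

text \<open>Irreducible homogeneous polynomial of degree d (d \<ge> 1). A factorisation of a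
  homogeneous polynomial has homogeneous factors, and the units of C[x,y,z] are
  the nonzero constants (degree 0).\<close>
definition irred_homog :: "nat \<Rightarrow> cpoly \<Rightarrow> bool" where
  "irred_homog d f \<longleftrightarrow> d \<ge> 1 \<and> homog d f \<and> f \<noteq> (\<lambda>_. 0) \<and>
     \<not> (\<exists>d1 d2 g h. d1 \<ge> 1 \<and> d2 \<ge> 1 \<and> homog d1 g \<and> homog d2 h \<and> f = pmult g h)"

text \<open>Taylor coefficient of u^p v^q in F(u,v) = f(a+u, b+v, 1), for f homogeneous of degree d.\<close>
definition taylor_coeff :: "nat \<Rightarrow> cpoly \<Rightarrow> complex \<times> complex \<Rightarrow> nat \<Rightarrow> nat \<Rightarrow> complex" where
  "taylor_coeff d f P p q = (case P of (a,b) \<Rightarrow>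
     \<Sum>i\<le>d. \<Sum>j\<le>d - i. f (i, j, d - i - j) * of_nat (i choose p) * of_nat (j choose q)
                        * a ^ (i - p) * b ^ (j - q))"

text \<open>Multiplicity of the curve f = 0 at the affine point P = (a,b) = [a:b:1]:
  the lowest total degree of a nonzero term of f(a+u,b+v,1).\<close>
definition mult_at :: "nat \<Rightarrow> cpoly \<Rightarrow> complex \<times> complex \<Rightarrow> nat" where
  "mult_at d f P = (LEAST m. \<exists>p q. p + q = m \<and> taylor_coeff d f P p q \<noteq> 0)"

definition bpts :: "complex \<Rightarrow> (complex \<times> complex) list" where
  "bpts \<alpha> = [(0,0), (1,\<i>), (\<alpha>, \<alpha>*\<i>), (1,-\<i>), (\<alpha>, -\<alpha>*\<i>)]"

text \<open>Curves on Y_alpha: an exceptional curve E(P), or the strict transform of the plane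
  curve f = 0 (f homogeneous of degree d).\<close>
datatype curveY = Exc "complex \<times> complex" | Strict nat cpoly

definition irreducible_curveY :: "complex \<Rightarrow> curveY \<Rightarrow> bool" where
  "irreducible_curveY \<alpha> C = (case C of
      Exc P \<Rightarrow> P \<in> set (bpts \<alpha>)
    | Strict d f \<Rightarrow> irred_homog d f)"

definition selfint :: "complex \<Rightarrow> curveY \<Rightarrow> int" where
  "selfint \<alpha> C = (case C of
      Exc P \<Rightarrow> -1
    | Strict d f \<Rightarrow> int d ^ 2 - (\<Sum>P\<leftarrow>bpts \<alpha>. int (mult_at d f P) ^ 2))"

definition lin :: "complex \<Rightarrow> complex \<Rightarrow> complex \<Rightarrow> cpoly" where
  "lin a b c = (\<lambda>t. if t = (1,0,0) then a else if t = (0,1,0) then b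
                    else if t = (0,0,1) then c else 0)"

definition listed_lines :: "complex \<Rightarrow> cpoly list" where
  "listed_lines \<alpha> =
     [lin 1 \<i> 0, lin 1 (-\<i>) 0, lin 1 0 (-1),
      lin (\<alpha>+1) ((\<alpha>-1)*\<i>) (-2*\<alpha>), lin (\<alpha>+1) (-(\<alpha>-1)*\<i>) (-2*\<alpha>),
      lin 1 0 (-\<alpha>)]"

end

theory Submission
  imports Defs "HOL-Computational_Algebra.Polynomial"
begin
definition ev :: "nat \<Rightarrow> cpoly \<Rightarrow> complex \<Rightarrow> complex \<Rightarrow> complex" where
  "ev d f x y = (\<Sum>i\<le>d. \<Sum>j\<le>d. f (i,j,d-i-j) * x^i * y^j)"

lemma homog_zero: "homog d f \<Longrightarrow> i + j > d \<Longrightarrow> f (i,j,d-i-j) = 0"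
proof -
  assume h: "homog d f" and l: "i + j > d"
  then have "d - i - j = 0" by simp
  then show ?thesis using h l unfolding homog_def by (metis add_0_right less_irrefl)
qed

lemma taylor_sq:
  assumes "homog d f"
  shows "taylor_coeff d f (a,b) p q = (\<Sum>i\<le>d. \<Sum>j\<le>d. f (i,j,d-i-j) * of_nat (i choose p) * of_nat (j choose q) * a^(i-p) * b^(j-q))"
  unfolding taylor_coeff_def
  apply simp
  apply (rule sum.cong[OF refl])
  apply (rule sum.mono_neutral_left)
  using homog_zero[OF assms] by auto

lemma binom_le:
  fixes a u :: complex
  assumes "i \<le> d"
  shows "(a+u)^i = (\<Sum>p\<le>d. of_nat (i choose p) * u^p * a^(i-p))"
proof -
  have "(a+u)^i = (u+a)^i" by (simp add: add.commute)
  also have "\<dots> = (\<Sum>p\<le>i. of_nat (i choose p) * u^p * a^(i-p))" by (rule binomial_ring)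
  also have "\<dots> = (\<Sum>p\<le>d. of_nat (i choose p) * u^p * a^(i-p))"
    apply (rule sum.mono_neutral_left) using assms by auto
  finally show ?thesis .
qed

lemma taylor_expand:
  assumes "homog d f"
  shows "ev d f (a+u) (b+v) = (\<Sum>p\<le>d. \<Sum>q\<le>d. taylor_coeff d f (a,b) p q * u^p * v^q)"
proof -
  have "ev d f (a+u) (b+v) = (\<Sum>i\<le>d. \<Sum>j\<le>d. f (i,j,d-i-j) *
      (\<Sum>p\<le>d. of_nat (i choose p) * u^p * a^(i-p)) * (\<Sum>q\<le>d. of_nat (j choose q) * v^q * b^(j-q)))"
    unfolding ev_def by (simp add: binom_le)
  also have "\<dots> = (\<Sum>i\<le>d. \<Sum>j\<le>d. \<Sum>p\<le>d. \<Sum>q\<le>d. f (i,j,d-i-j) * of_nat (i choose p) * of_nat (j choose q) * a^(i-p) * b^(j-q) * u^p * v^q)"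
    by (simp add: sum_distrib_left sum_distrib_right mult_ac)
  also have "\<dots> = (\<Sum>i\<le>d. \<Sum>p\<le>d. \<Sum>j\<le>d. \<Sum>q\<le>d. f (i,j,d-i-j) * of_nat (i choose p) * of_nat (j choose q) * a^(i-p) * b^(j-q) * u^p * v^q)"
    by (rule sum.cong[OF refl], rule sum.swap)
  also have "\<dots> = (\<Sum>p\<le>d. \<Sum>i\<le>d. \<Sum>j\<le>d. \<Sum>q\<le>d. f (i,j,d-i-j) * of_nat (i choose p) * of_nat (j choose q) * a^(i-p) * b^(j-q) * u^p * v^q)"
    by (rule sum.swap)
  also have "\<dots> = (\<Sum>p\<le>d. \<Sum>i\<le>d. \<Sum>q\<le>d. \<Sum>j\<le>d. f (i,j,d-i-j) * of_nat (i choose p) * of_nat (j choose q) * a^(i-p) * b^(j-q) * u^p * v^q)"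
    by (rule sum.cong[OF refl], rule sum.cong[OF refl], rule sum.swap)
  also have "\<dots> = (\<Sum>p\<le>d. \<Sum>q\<le>d. \<Sum>i\<le>d. \<Sum>j\<le>d. f (i,j,d-i-j) * of_nat (i choose p) * of_nat (j choose q) * a^(i-p) * b^(j-q) * u^p * v^q)"
    by (rule sum.cong[OF refl], rule sum.swap)
  also have "\<dots> = (\<Sum>p\<le>d. \<Sum>q\<le>d. taylor_coeff d f (a,b) p q * u^p * v^q)"
    by (simp add: taylor_sq[OF assms] sum_distrib_right)
  finally show ?thesis .
qed

definition lpoly :: "nat \<Rightarrow> cpoly \<Rightarrow> complex \<Rightarrow> complex \<Rightarrow> complex \<Rightarrow> complex \<Rightarrow> complex poly" where
  "lpoly d f x0 y0 v1 v2 = (\<Sum>i\<le>d. \<Sum>j\<le>d. smult (f (i,j,d-i-j)) ([:x0,v1:]^i * [:y0,v2:]^j))"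

lemma poly_lpoly: "poly (lpoly d f x0 y0 v1 v2) t = ev d f (x0 + t*v1) (y0 + t*v2)"
  unfolding lpoly_def ev_def by (simp add: poly_sum mult_ac)

lemma degree_lpoly:
  assumes "homog d f"
  shows "degree (lpoly d f x0 y0 v1 v2) \<le> d"
  unfolding lpoly_def
proof (intro degree_sum_le)
  fix i j assume "i \<in> {..d}" "j \<in> {..d}"
  show "degree (smult (f (i,j,d-i-j)) ([:x0,v1:]^i * [:y0,v2:]^j)) \<le> d"
  proof (cases "f (i,j,d-i-j) = 0")
    case True then show ?thesis by simp
  next
    case False
    then have "i + j \<le> d" using homog_zero[OF assms, of i j] by (meson not_le)
    have "degree ([:x0,v1:]^i * [:y0,v2:]^j) \<le> degree ([:x0,v1:]^i) + degree ([:y0,v2:]^j)"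
      by (rule degree_mult_le)
    also have "\<dots> \<le> degree [:x0,v1:] * i + degree [:y0,v2:] * j"
      by (intro add_mono degree_power_le)
    also have "\<dots> \<le> i + j" by (intro add_mono) (auto simp: degree_pCons_eq_if)
    finally show ?thesis using \<open>i+j\<le>d\<close> by simp
  qed
qed (rule finite_atMost)+

definition tpoly :: "nat \<Rightarrow> cpoly \<Rightarrow> complex \<Rightarrow> complex \<Rightarrow> complex \<Rightarrow> complex \<Rightarrow> complex \<Rightarrow> complex poly" where
  "tpoly d f a b v1 v2 t0 = (\<Sum>p\<le>d. \<Sum>q\<le>d. smult (taylor_coeff d f (a,b) p q) ([:-t0*v1,v1:]^p * [:-t0*v2,v2:]^q))"

lemma lpoly_tpoly:
  assumes "homog d f"
  shows "lpoly d f x0 y0 v1 v2 = tpoly d f (x0 + t0*v1) (y0 + t0*v2) v1 v2 t0"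
proof -
  have "poly (lpoly d f x0 y0 v1 v2) t = poly (tpoly d f (x0 + t0*v1) (y0 + t0*v2) v1 v2 t0) t" for t
  proof -
    have "poly (lpoly d f x0 y0 v1 v2) t = ev d f ((x0 + t0*v1) + (t-t0)*v1) ((y0 + t0*v2) + (t-t0)*v2)"
      unfolding poly_lpoly by (simp add: algebra_simps)
    also have "\<dots> = poly (tpoly d f (x0 + t0*v1) (y0 + t0*v2) v1 v2 t0) t"
      unfolding taylor_expand[OF assms] tpoly_def poly_sum
    proof (intro sum.cong refl)
      fix p q
      have e: "\<And>v. poly [:-t0*v,v:] t = (t-t0)*v" by (simp add: algebra_simps)
      show "taylor_coeff d f (x0 + t0 * v1, y0 + t0 * v2) p q * ((t - t0) * v1) ^ p * ((t - t0) * v2) ^ q =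
        poly (smult (taylor_coeff d f (x0 + t0 * v1, y0 + t0 * v2) p q) ([:- t0 * v1, v1:] ^ p * [:- t0 * v2, v2:] ^ q)) t"
        by (simp only: poly_smult poly_mult poly_power e mult.assoc)
    qed
    finally show ?thesis .
  qed
  then show ?thesis using poly_eq_poly_eq_iff by blast
qed

lemma lin_pow_dvd: "[:-t0,1:]^p dvd [:-t0*v,v:]^p"
proof -
  have e: "[:-t0*v,v:] = smult v [:-t0,1:]" by (simp add: mult.commute)
  show ?thesis unfolding e smult_power by (rule dvd_smult, rule dvd_refl)
qed

lemma mult_at_low:
  assumes "p + q < mult_at d f P"
  shows "taylor_coeff d f P p q = 0"
proof (rule ccontr)
  assume "taylor_coeff d f P p q \<noteq> 0"
  then have "mult_at d f P \<le> p + q" unfolding mult_at_def by (intro Least_le) blast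
  with assms show False by simp
qed

lemma tpoly_dvd:
  "[:-t0,1:]^(mult_at d f (a,b)) dvd tpoly d f a b v1 v2 t0"
  unfolding tpoly_def
proof (intro dvd_sum)
  fix p q assume "p \<in> {..d}" "q \<in> {..d}"
  show "[:-t0,1:]^(mult_at d f (a,b)) dvd smult (taylor_coeff d f (a,b) p q) ([:-t0*v1,v1:]^p * [:-t0*v2,v2:]^q)"
  proof (cases "p + q < mult_at d f (a,b)")
    case True then show ?thesis using mult_at_low[OF True] by (simp only: smult_0_left dvd_0_right)
  next
    case False
    have "[:-t0,1:]^(p+q) dvd [:-t0*v1,v1:]^p * [:-t0*v2,v2:]^q"
      unfolding power_add by (intro mult_dvd_mono lin_pow_dvd)
    moreover have "[:-t0,1:]^(mult_at d f (a,b)) dvd [:-t0,1:]^(p+q)"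
      using False by (simp add: le_imp_power_dvd)
    ultimately show ?thesis by (intro dvd_smult) (rule dvd_trans)
  qed
qed

lemma mult_le_order:
  assumes "homog d f" "lpoly d f x0 y0 v1 v2 \<noteq> 0"
  shows "mult_at d f (x0 + t0*v1, y0 + t0*v2) \<le> order t0 (lpoly d f x0 y0 v1 v2)"
proof -
  have "[:-t0,1:]^(mult_at d f (x0 + t0*v1, y0 + t0*v2)) dvd lpoly d f x0 y0 v1 v2"
    unfolding lpoly_tpoly[OF assms(1), of x0 y0 v1 v2 t0] by (rule tpoly_dvd)
  then show ?thesis using assms(2) by (simp add: order_divides)
qed

lemma sum_order_le:
  fixes g :: "complex poly"
  assumes "g \<noteq> 0" "finite S"
  shows "(\<Sum>t\<in>S. order t g) \<le> degree g"
proof -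
  have "(\<Sum>t\<in>S. order t g) = (\<Sum>t\<in>S. count (proots g) t)" using assms by simp
  also have "\<dots> = (\<Sum>t\<in>S \<inter> set_mset (proots g). count (proots g) t)"
    apply (rule sum.mono_neutral_right) using assms by (auto simp: count_eq_zero_iff order_root)
  also have "\<dots> \<le> (\<Sum>t\<in>set_mset (proots g). count (proots g) t)"
    by (rule sum_mono2) auto
  also have "\<dots> = size (proots g)" by (simp add: size_multiset_overloaded_eq)
  also have "\<dots> \<le> degree g" by (rule size_proots_le)
  finally show ?thesis .
qed

lemma bezout_line:
  assumes "homog d f" "lpoly d f x0 y0 v1 v2 \<noteq> 0" "finite S"
  shows "(\<Sum>t\<in>S. mult_at d f (x0 + t*v1, y0 + t*v2)) \<le> d"
proof -
  have "(\<Sum>t\<in>S. mult_at d f (x0 + t*v1, y0 + t*v2)) \<le> (\<Sum>t\<in>S. order t (lpoly d f x0 y0 v1 v2))"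
    by (intro sum_mono mult_le_order assms)
  also have "\<dots> \<le> degree (lpoly d f x0 y0 v1 v2)" by (intro sum_order_le assms)
  also have "\<dots> \<le> d" by (rule degree_lpoly[OF assms(1)])
  finally show ?thesis .
qed

lemma Dlt: "(\<Sum>k1\<le>(k::nat). if k1 = r then g k1 else (0::complex)) = (if r \<le> k then g r else 0)"
proof -
  have "(\<Sum>k1\<in>{..k}. if k1 = r then g k1 else (0::complex)) = (if r \<in> {..k} then g r else 0)"
    by (rule sum.delta[OF finite_atMost])
  then show ?thesis by simp
qed
lemma D1: "(\<Sum>k1\<le>(k::nat). if A \<and> B \<and> k1 = r then g k1 else (0::complex)) = (if A \<and> B \<and> r \<le> k then g r else 0)"
  by (cases A; cases B) (simp_all add: Dlt)
lemma D2: "(\<Sum>j1\<le>(j::nat). if A \<and> j1 = q \<and> C then g j1 else (0::complex)) = (if A \<and> q \<le> j \<and> C then g q else 0)"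
  by (cases "A \<and> C") (auto simp: Dlt)
lemma D3: "(\<Sum>i1\<le>(i::nat). if i1 = p \<and> C then g i1 else (0::complex)) = (if p \<le> i \<and> C then g p else 0)"
  by (cases C) (auto simp: Dlt)

lemma sum_delta3:
  "(\<Sum>i1\<le>(i::nat). \<Sum>j1\<le>(j::nat). \<Sum>k1\<le>(k::nat). if i1 = p \<and> j1 = q \<and> k1 = r then g i1 j1 k1 else (0::complex)) =
   (if p \<le> i \<and> q \<le> j \<and> r \<le> k then g p q r else 0)"
  by (simp only: D1 D2 D3)

lemma pmult_lin:
  "pmult (lin a b c) h (i,j,k) = (if 0<i then a*h(i-1,j,k) else 0) + (if 0<j then b*h(i,j-1,k) else 0)
     + (if 0<k then c*h(i,j,k-1) else 0)"
proof -
  have "pmult (lin a b c) h (i,j,k) = (\<Sum>i1\<le>i. \<Sum>j1\<le>j. \<Sum>k1\<le>k.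
      (if i1 = 1 \<and> j1 = 0 \<and> k1 = 0 then a * h (i-i1,j-j1,k-k1) else 0) +
      (if i1 = 0 \<and> j1 = 1 \<and> k1 = 0 then b * h (i-i1,j-j1,k-k1) else 0) +
      (if i1 = 0 \<and> j1 = 0 \<and> k1 = 1 then c * h (i-i1,j-j1,k-k1) else 0))"
    unfolding pmult_def lin_def prod.case by (intro sum.cong refl) auto
  also have "\<dots> = (if 1 \<le> i then a*h(i-1,j,k) else 0) + (if 1\<le>j then b*h(i,j-1,k) else 0)
     + (if 1 \<le> k then c*h(i,j,k-1) else 0)"
    by (simp only: sum.distrib sum_delta3) simp
  finally show ?thesis by simp
qed

definition sw :: "cpoly \<Rightarrow> cpoly" where "sw f = (\<lambda>(i,j,k). f (j,i,k))"

lemma sw_apply[simp]: "sw f (i,j,k) = f (j,i,k)" by (simp add: sw_def)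
lemma sw_sw[simp]: "sw (sw f) = f" by (rule ext) (auto simp: sw_def)
lemma homog_sw: "homog d (sw f) = homog d f"
  unfolding homog_def by (metis add.commute sw_apply)
lemma sw_lin: "sw (lin a b c) = lin b a c"
proof (rule ext, clarify)
  fix i j k show "sw (lin a b c) (i,j,k) = lin b a c (i,j,k)" by (auto simp: lin_def)
qed
lemma sw_pmult: "sw (pmult g h) = pmult (sw g) (sw h)"
proof (rule ext, clarify)
  fix i j k
  show "sw (pmult g h) (i,j,k) = pmult (sw g) (sw h) (i,j,k)"
    unfolding sw_apply pmult_def by (simp add: sum.swap[of _ "{..i}"])
qed
lemma ev_sw: "ev d (sw f) x y = ev d f y x"
  unfolding ev_def sw_apply
  by (subst sum.swap) (simp add: mult_ac diff_diff_left add.commute)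

lemma Dltg: "(\<Sum>k1\<le>(k::nat). if k1 = r then g k1 else (0::'a::comm_monoid_add)) = (if r \<le> k then g r else 0)"
proof -
  have "(\<Sum>k1\<in>{..k}. if k1 = r then g k1 else (0::'a)) = (if r \<in> {..k} then g r else 0)"
    by (rule sum.delta[OF finite_atMost])
  then show ?thesis by simp
qed

definition npoly :: "nat \<Rightarrow> cpoly \<Rightarrow> complex poly poly" where
  "npoly d f = (\<Sum>i\<le>d. monom (\<Sum>j\<le>d. monom (f (i,j,d-i-j)) j) i)"

lemma coeff_npoly: "coeff (coeff (npoly d f) i) j = (if i \<le> d \<and> j \<le> d then f (i,j,d-i-j) else 0)"
  unfolding npoly_def coeff_sum coeff_monom
  by (simp add: Dltg coeff_sum coeff_monom if_distrib[of "\<lambda>p. coeff p j"] cong: if_cong)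

lemma poly_npoly: "poly (poly (npoly d f) [:\<gamma>,\<beta>:]) y = ev d f (\<beta>*y+\<gamma>) y"
  unfolding npoly_def ev_def
  by (simp add: poly_sum poly_monom sum_distrib_left sum_distrib_right mult_ac add.commute)

lemma coeff_lin_mult:
  fixes Q :: "complex poly poly"
  shows "coeff (coeff ([:-[:\<gamma>,\<beta>:],1:] * Q) n) j =
     (if n = 0 then 0 else coeff (coeff Q (n-1)) j) - \<gamma> * coeff (coeff Q n) j
     - (if j = 0 then 0 else \<beta> * coeff (coeff Q n) (j-1))"
proof -
  have e1: "[:-[:\<gamma>,\<beta>:],1:] * Q = smult (-[:\<gamma>,\<beta>:]) Q + pCons 0 Q"
    by (simp add: mult_pCons_left)
  have e2: "\<And>q::complex poly. [:\<gamma>,\<beta>:] * q = smult \<gamma> q + pCons 0 (smult \<beta> q)"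
    by (simp add: mult_pCons_left)
  show ?thesis
    unfolding e1 coeff_add coeff_smult coeff_pCons
    by (cases n; cases j) (simp_all add: e2 coeff_pCons)
qed

lemma vanish_line_factor:
  assumes hf: "homog d f" and d1: "d \<ge> 1" and van: "\<forall>y. ev d f (\<beta>*y+\<gamma>) y = 0"
  shows "\<exists>h. homog (d-1) h \<and> f = pmult (lin 1 (-\<beta>) (-\<gamma>)) h"
proof -
  define P where "P = npoly d f"
  define a where "a = [:\<gamma>,\<beta>:]"
  have "poly P a = 0"
    unfolding P_def a_def poly_all_0_iff_0[symmetric] poly_npoly using van by blast
  then have "[:-a,1:] dvd P" by (simp add: poly_eq_0_iff_dvd)
  then obtain Q where PQ: "P = [:-a,1:] * Q" by (elim dvdE)
  define q where "q i j = coeff (coeff Q i) j" for i j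
  have rel: "coeff (coeff P n) j = (if n = 0 then 0 else q (n-1) j) - \<gamma> * q n j
     - (if j = 0 then 0 else \<beta> * q n (j-1))" for n j
    unfolding PQ a_def q_def by (rule coeff_lin_mult)
  have Pc: "coeff (coeff P i) j = (if i \<le> d \<and> j \<le> d then f (i,j,d-i-j) else 0)" for i j
    unfolding P_def by (rule coeff_npoly)
  have degP: "degree P \<le> d"
  proof (rule degree_le, intro allI impI)
    fix i assume "d < i"
    then show "coeff P i = 0" using Pc by (intro poly_eqI) simp
  qed
  have Qtop: "coeff Q i = 0" if "d \<le> i" for i
  proof (cases "Q = 0")
    case True then show ?thesis by simp
  next
    case False
    have "degree P = degree [:-a,1:] + degree Q" unfolding PQ
      by (rule degree_mult_eq) (use False in auto)
    then have "degree Q < i" using degP that d1 by simp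
    then show ?thesis by (rule coeff_eq_0)
  qed
  have low: "\<forall>i j. d - i \<le> n \<longrightarrow> d \<le> i + j \<longrightarrow> q i j = 0" for n
  proof (induction n)
    case 0 then show ?case using Qtop unfolding q_def by simp
  next
    case (Suc n)
    show ?case
    proof (intro allI impI)
      fix i j assume a1: "d - i \<le> Suc n" and a2: "d \<le> i + j"
      show "q i j = 0"
      proof (cases "d \<le> i")
        case True then show ?thesis using Qtop unfolding q_def by simp
      next
        case False
        have "coeff (coeff P (Suc i)) j = 0"
          using Pc[of "Suc i" j] homog_zero[OF hf, of "Suc i" j] a2 by simp
        moreover have "q (Suc i) j = 0" using Suc.IH a1 a2 False by simp
        moreover have "j \<noteq> 0 \<Longrightarrow> q (Suc i) (j-1) = 0" using Suc.IH a1 a2 False by simp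
        ultimately show ?thesis using rel[of "Suc i" j] by (cases "j = 0") simp_all
      qed
    qed
  qed
  then have low': "q i j = 0" if "d \<le> i + j" for i j using that by blast
  define h where "h = (\<lambda>(i,j,k). if i + j + k = d - 1 then q i j else 0)"
  have hh: "homog (d-1) h" unfolding homog_def h_def by auto
  have "f = pmult (lin 1 (-\<beta>) (-\<gamma>)) h"
  proof (rule ext, clarify)
    fix i j k
    show "f (i,j,k) = pmult (lin 1 (-\<beta>) (-\<gamma>)) h (i,j,k)"
    proof (cases "i + j + k = d")
      case True
      then have k: "k = d - i - j" and ij: "i \<le> d" "j \<le> d" by auto
      have "f (i,j,k) = coeff (coeff P i) j" using Pc ij k by simp
      also have "\<dots> = (if i = 0 then 0 else q (i-1) j) - \<gamma> * q i j
         - (if j = 0 then 0 else \<beta> * q i (j-1))" by (rule rel)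
      also have "\<dots> = pmult (lin 1 (-\<beta>) (-\<gamma>)) h (i,j,k)"
      proof -
        have T1: "(if 0<i then 1*h(i-1,j,k) else 0) = (if i = 0 then 0 else q (i-1) j)"
          unfolding h_def using True d1 by simp
        have T2: "(if 0<j then -\<beta>*h(i,j-1,k) else 0) = -(if j = 0 then 0 else \<beta> * q i (j-1))"
          unfolding h_def using True d1 by simp
        have T3: "(if 0<k then -\<gamma>*h(i,j,k-1) else 0) = -\<gamma> * q i j"
          unfolding h_def using True d1 low'[of i j] by auto
        show ?thesis unfolding pmult_lin T1 T2 T3 by simp
      qed
      finally show ?thesis .
    next
      case False
      then have "f (i,j,k) = 0" using hf unfolding homog_def by blast
      moreover have "pmult (lin 1 (-\<beta>) (-\<gamma>)) h (i,j,k) = 0"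
      proof -
        have T1: "(if 0<i then 1*h(i-1,j,k) else 0) = 0"
          unfolding h_def using False d1 by (cases i) auto
        have T2: "(if 0<j then -\<beta>*h(i,j-1,k) else 0) = 0"
          unfolding h_def using False d1 by (cases j) auto
        have T3: "(if 0<k then -\<gamma>*h(i,j,k-1) else 0) = 0"
          unfolding h_def using False d1 by (cases k) auto
        show ?thesis unfolding pmult_lin T1 T2 T3 by simp
      qed
      ultimately show ?thesis by simp
    qed
  qed
  with hh show ?thesis by blast
qed

lemma homog_lin: "homog 1 (lin a b c)"
  unfolding homog_def lin_def by auto

lemma not_irred_factor:
  assumes "homog (d-1) h" "d \<ge> 2" "f = pmult (lin a b c) h"
  shows "\<not> irred_homog d f"
proof -
  have "d - 1 \<ge> 1" "homog 1 (lin a b c)" using assms(2) homog_lin by auto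
  then show ?thesis unfolding irred_homog_def using assms by blast
qed

lemma lpoly_zero_not_irred:
  assumes hf: "homog d f" and d2: "d \<ge> 2" and v: "v1 \<noteq> 0 \<or> v2 \<noteq> 0"
    and z: "lpoly d f x0 y0 v1 v2 = 0"
  shows "\<not> irred_homog d f"
proof -
  have van: "ev d f (x0 + t*v1) (y0 + t*v2) = 0" for t
    using z poly_lpoly[of d f x0 y0 v1 v2 t] by simp
  show ?thesis
  proof (cases "v2 = 0")
    case False
    define \<beta> where "\<beta> = v1/v2"
    define \<gamma> where "\<gamma> = x0 - y0*v1/v2"
    have "\<forall>y. ev d f (\<beta>*y+\<gamma>) y = 0"
    proof
      fix y
      have e1: "x0 + ((y-y0)/v2)*v1 = \<beta>*y+\<gamma>" unfolding \<beta>_def \<gamma>_def using False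
        by (simp add: field_simps)
      have e2: "y0 + ((y-y0)/v2)*v2 = y" using False by simp
      show "ev d f (\<beta>*y+\<gamma>) y = 0" using van[of "(y-y0)/v2"] unfolding e1 e2 .
    qed
    then obtain h where "homog (d-1) h" "f = pmult (lin 1 (-\<beta>) (-\<gamma>)) h"
      using vanish_line_factor[OF hf] d2 by (meson le_trans one_le_numeral)
    then show ?thesis using not_irred_factor d2 by blast
  next
    case True
    with v have v1: "v1 \<noteq> 0" by simp
    have "\<forall>y. ev d (sw f) (0*y+y0) y = 0"
    proof
      fix y
      have e1: "x0 + ((y-x0)/v1)*v1 = y" using v1 by simp
      show "ev d (sw f) (0*y+y0) y = 0" unfolding ev_sw using van[of "(y-x0)/v1"] True
        unfolding e1 by simp
    qed
    moreover have "homog d (sw f)" using hf homog_sw by simp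
    ultimately obtain h where hh: "homog (d-1) h" "sw f = pmult (lin 1 (-0) (-y0)) h"
      using vanish_line_factor d2 by (meson le_trans one_le_numeral)
    then have "f = pmult (lin (-0) 1 (-y0)) (sw h)"
      by (metis sw_sw sw_pmult sw_lin)
    moreover have "homog (d-1) (sw h)" using hh homog_sw by simp
    ultimately show ?thesis using not_irred_factor d2 by blast
  qed
qed

lemma bezout_irred:
  assumes "irred_homog d f" "d \<ge> 2" "v1 \<noteq> 0 \<or> v2 \<noteq> 0" "finite S"
  shows "(\<Sum>t\<in>S. mult_at d f (x0 + t*v1, y0 + t*v2)) \<le> d"
proof -
  have hf: "homog d f" using assms(1) unfolding irred_homog_def by simp
  have "lpoly d f x0 y0 v1 v2 \<noteq> 0" using lpoly_zero_not_irred[OF hf assms(2,3)] assms(1) by blast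
  then show ?thesis using bezout_line[OF hf _ assms(4)] by simp
qed

lemma numineq:
  fixes s a b c e d :: int
  assumes nn: "0 \<le> s" "0 \<le> a" "0 \<le> b" "0 \<le> c" "0 \<le> e"
    and l1: "s + a + b \<le> d" and l2: "s + c + e \<le> d"
    and p1: "a + c \<le> d" "a + e \<le> d" "b + c \<le> d" "b + e \<le> d"
  shows "s^2 + a^2 + b^2 + c^2 + e^2 \<le> d^2"
proof -
  define A where "A = max a b"
  define B where "B = max c e"
  have AB: "A + B \<le> d" unfolding A_def B_def using p1 by (simp add: max_def)
  have A0: "0 \<le> A" "a \<le> A" "b \<le> A" unfolding A_def using nn by auto
  have B0: "0 \<le> B" "c \<le> B" "e \<le> B" unfolding B_def using nn by auto
  have "a*a \<le> A*a" by (rule mult_right_mono) (use A0 nn in auto)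
  moreover have "b*b \<le> A*b" by (rule mult_right_mono) (use A0 nn in auto)
  moreover have "A*(a+b) \<le> A*(d-s)" by (rule mult_left_mono) (use A0 l1 in auto)
  moreover have "c*c \<le> B*c" by (rule mult_right_mono) (use B0 nn in auto)
  moreover have "e*e \<le> B*e" by (rule mult_right_mono) (use B0 nn in auto)
  moreover have "B*(c+e) \<le> B*(d-s)" by (rule mult_left_mono) (use B0 l2 in auto)
  moreover have "(A+B)*(d-s) \<le> d*(d-s)" by (rule mult_right_mono) (use AB l1 nn in auto)
  moreover have "s*s \<le> d*s" by (rule mult_right_mono) (use l1 nn in auto)
  moreover have "A*(a+b) = A*a + A*b" "B*(c+e) = B*c+B*e" "(A+B)*(d-s) = A*(d-s) + B*(d-s)"
    "d*(d-s) = d*d - d*s" by (simp_all add: algebra_simps)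
  ultimately show ?thesis unfolding power2_eq_square by linarith
qed

lemma atMost_1: "{..1::nat} = {0,1}" by auto

lemma taylor1:
  "taylor_coeff 1 f (x,y) p q = f (0,0,1) * of_nat (0 choose p) * of_nat (0 choose q) * x^(0-p) * y^(0-q)
    + f (0,1,0) * of_nat (0 choose p) * of_nat (1 choose q) * x^(0-p) * y^(1-q)
    + f (1,0,0) * of_nat (1 choose p) * of_nat (0 choose q) * x^(1-p) * y^(0-q)"
  unfolding taylor_coeff_def by (simp add: atMost_1)

lemma T00: "taylor_coeff 1 f (x,y) 0 0 = f (0,0,1) + f (0,1,0) * y + f (1,0,0) * x"
  unfolding taylor1 by simp
lemma T10: "taylor_coeff 1 f (x,y) 1 0 = f (1,0,0)"
  unfolding taylor1 by simp
lemma T01: "taylor_coeff 1 f (x,y) 0 1 = f (0,1,0)"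
  unfolding taylor1 by simp

lemma homog1_lin: "homog 1 f \<Longrightarrow> f = lin (f (1,0,0)) (f (0,1,0)) (f (0,0,1))"
proof (rule ext, clarify)
  fix i j k assume h: "homog 1 f"
  show "f (i,j,k) = lin (f (1,0,0)) (f (0,1,0)) (f (0,0,1)) (i,j,k)"
  proof (cases "i + j + k = 1")
    case True
    then have "(i,j,k) = (1,0,0) \<or> (i,j,k) = (0,1,0) \<or> (i,j,k) = (0,0,1)" by auto
    then show ?thesis unfolding lin_def by auto
  next
    case False
    then have "f (i,j,k) = 0" using h unfolding homog_def by blast
    moreover have "lin (f (1,0,0)) (f (0,1,0)) (f (0,0,1)) (i,j,k) = 0" unfolding lin_def using False by auto
    ultimately show ?thesis by simp
  qed
qed

lemma mult1_nz:
  assumes "mult_at 1 f (x,y) \<noteq> 0"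
  shows "f (0,0,1) + f (0,1,0) * y + f (1,0,0) * x = 0"
proof (rule ccontr)
  assume "f (0,0,1) + f (0,1,0) * y + f (1,0,0) * x \<noteq> 0"
  then have "taylor_coeff 1 f (x,y) 0 0 \<noteq> 0" unfolding T00 .
  then have "mult_at 1 f (x,y) \<le> 0 + 0" unfolding mult_at_def
    by (intro Least_le) blast
  with assms show False by simp
qed

lemma mult1_le:
  assumes h: "homog 1 f" and nz: "f \<noteq> (\<lambda>_. 0)"
  shows "mult_at 1 f (x,y) \<le> 1"
proof -
  have "\<exists>p q. p + q \<le> 1 \<and> taylor_coeff 1 f (x,y) p q \<noteq> 0"
  proof (rule ccontr)
    assume "\<not> ?thesis"
    then have A: "\<forall>p q. p + q \<le> 1 \<longrightarrow> taylor_coeff 1 f (x,y) p q = 0" by blast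
    have "taylor_coeff 1 f (x,y) 0 0 = 0" "taylor_coeff 1 f (x,y) 1 0 = 0" "taylor_coeff 1 f (x,y) 0 1 = 0"
      using A[rule_format, of 0 0] A[rule_format, of 1 0] A[rule_format, of 0 1] by simp_all
    then have "f (1,0,0) = 0" "f (0,1,0) = 0" "f (0,0,1) = 0" unfolding T00 T10 T01 by simp_all
    then have "f = lin 0 0 0" using homog1_lin[OF h] by simp
    moreover have "lin 0 0 0 = (\<lambda>_. 0)" by (rule ext) (simp add: lin_def)
    ultimately have "f = (\<lambda>_. 0)" by simp
    with nz show False by simp
  qed
  then obtain p q where "p + q \<le> 1" "taylor_coeff 1 f (x,y) p q \<noteq> 0" by blast
  then have "mult_at 1 f (x,y) \<le> p + q" unfolding mult_at_def by (intro Least_le) blast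
  with \<open>p+q \<le> 1\<close> show ?thesis by simp
qed

lemma mult1_ge:
  assumes "f (1,0,0) \<noteq> 0 \<or> f (0,1,0) \<noteq> 0" and "f (0,0,1) + f (0,1,0) * y + f (1,0,0) * x = 0"
  shows "1 \<le> mult_at 1 f (x,y)"
proof -
  have ex: "\<exists>m p q. p + q = m \<and> taylor_coeff 1 f (x,y) p q \<noteq> 0"
  proof (cases "f (1,0,0) = 0")
    case True
    then have "taylor_coeff 1 f (x,y) 0 1 \<noteq> 0" using assms(1) T01 by simp
    then show ?thesis by blast
  next
    case False
    then have "taylor_coeff 1 f (x,y) 1 0 \<noteq> 0" using T10 by simp
    then show ?thesis by blast
  qed
  have "\<exists>p q. p + q = mult_at 1 f (x,y) \<and> taylor_coeff 1 f (x,y) p q \<noteq> 0"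
    unfolding mult_at_def using LeastI_ex[OF ex] .
  then obtain p q where pq: "p + q = mult_at 1 f (x,y)" "taylor_coeff 1 f (x,y) p q \<noteq> 0" by blast
  show ?thesis
  proof (rule ccontr)
    assume "\<not> ?thesis"
    then have "p = 0" "q = 0" using pq by auto
    then show False using pq assms(2) T00 by simp
  qed
qed

lemma deg1_irred:
  assumes h: "homog 1 f" and nz: "f \<noteq> (\<lambda>_. 0)"
  shows "irred_homog 1 f"
proof -
  have "\<not> (\<exists>d1 d2 g h. d1 \<ge> 1 \<and> d2 \<ge> 1 \<and> homog d1 g \<and> homog d2 h \<and> f = pmult g h)"
  proof
    assume "\<exists>d1 d2 g h. d1 \<ge> 1 \<and> d2 \<ge> 1 \<and> homog d1 g \<and> homog d2 h \<and> f = pmult g h"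
    then obtain d1 d2 g h where dd: "d1 \<ge> 1" "d2 \<ge> 1" and hg: "homog d1 g" and hh: "homog d2 h"
      and fe: "f = pmult g h" by blast
    have "f t = 0" for t
    proof -
      obtain i j k where t: "t = (i,j,k)" by (cases t) auto
      show ?thesis
      proof (cases "i + j + k = 1")
        case False then show ?thesis using h t unfolding homog_def by blast
      next
        case True
        have "pmult g h (i,j,k) = 0" unfolding pmult_def prod.case
        proof (intro sum.neutral ballI)
          fix i1 j1 k1 assume "i1 \<in> {..i}" "j1 \<in> {..j}" "k1 \<in> {..k}"
          then have le: "i1 \<le> i" "j1 \<le> j" "k1 \<le> k" by auto
          show "g (i1,j1,k1) * h (i-i1, j-j1, k-k1) = 0"
          proof (rule ccontr)
            assume "g (i1,j1,k1) * h (i-i1, j-j1, k-k1) \<noteq> 0"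
            then have "g (i1,j1,k1) \<noteq> 0" "h (i-i1, j-j1, k-k1) \<noteq> 0" by auto
            then have "i1+j1+k1 = d1" "(i-i1)+(j-j1)+(k-k1) = d2" using hg hh unfolding homog_def by blast+
            then show False using le dd True by linarith
          qed
        qed
        then show ?thesis using fe t by simp
      qed
    qed
    then show False using nz by auto
  qed
  then show ?thesis unfolding irred_homog_def using h nz by simp
qed

lemma lin_scale: "(\<lambda>t. k * lin a b c t) = lin (k*a) (k*b) (k*c)"
  by (rule ext) (simp add: lin_def)

lemma lin_nz: "a \<noteq> 0 \<or> b \<noteq> 0 \<Longrightarrow> lin a b c \<noteq> (\<lambda>_. 0)"
proof
  assume "a \<noteq> 0 \<or> b \<noteq> 0" "lin a b c = (\<lambda>_. 0)"
  then have "lin a b c (1,0,0) = 0" "lin a b c (0,1,0) = 0" by auto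
  then have "a = 0" "b = 0" by (simp_all add: lin_def)
  with \<open>a \<noteq> 0 \<or> b \<noteq> 0\<close> show False by simp
qed

lemma distinct_bpts:
  assumes "\<alpha> \<noteq> 0" "\<alpha> \<noteq> 1"
  shows "distinct (bpts \<alpha>)"
proof -
  have i1: "\<i> \<noteq> -\<i>" by (simp add: complex_eq_iff)
  have i2: "\<alpha>*\<i> \<noteq> -\<alpha>*\<i>"
  proof
    assume "\<alpha>*\<i> = -\<alpha>*\<i>"
    then have "2*(\<alpha>*\<i>) = 0" by simp
    then show False using assms(1) by simp
  qed
  show ?thesis unfolding bpts_def using assms i1 i2 by auto
qed

lemma sq1: "1 \<le> m \<Longrightarrow> (1::int) \<le> int m ^ 2"
  by (metis one_le_power of_nat_1 of_nat_mono power2_eq_square le_trans mult_left_le one_le_numeral)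

lemma selfint_two:
  assumes dist: "distinct (bpts \<alpha>)" and P: "P \<in> set (bpts \<alpha>)" and Q: "Q \<in> set (bpts \<alpha>)" and PQ: "P \<noteq> Q"
    and mP: "1 \<le> mult_at 1 g P" and mQ: "1 \<le> mult_at 1 g Q"
  shows "selfint \<alpha> (Strict 1 g) < 0"
proof -
  let ?F = "\<lambda>P. int (mult_at 1 g P) ^ 2"
  have "(\<Sum>P\<leftarrow>bpts \<alpha>. ?F P) = (\<Sum>P\<in>set (bpts \<alpha>). ?F P)"
    using dist by (rule sum_list_distinct_conv_sum_set)
  also have "\<dots> \<ge> (\<Sum>P\<in>{P,Q}. ?F P)"
    by (rule sum_mono2) (use P Q in auto)
  finally have "(\<Sum>P\<leftarrow>bpts \<alpha>. ?F P) \<ge> ?F P + ?F Q" using PQ by simp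
  moreover have "?F P \<ge> 1" "?F Q \<ge> 1" using sq1 mP mQ by auto
  ultimately show ?thesis unfolding selfint_def by simp
qed

lemma line_good:
  assumes dist: "distinct (bpts \<alpha>)" and ab: "a \<noteq> 0 \<or> b \<noteq> 0"
    and P: "(x1,y1) \<in> set (bpts \<alpha>)" and Q: "(x2,y2) \<in> set (bpts \<alpha>)" and PQ: "(x1,y1) \<noteq> (x2,y2)"
    and v1: "c + b*y1 + a*x1 = 0" and v2: "c + b*y2 + a*x2 = 0"
  shows "irred_homog 1 (lin a b c) \<and> selfint \<alpha> (Strict 1 (lin a b c)) < 0"
proof
  show "irred_homog 1 (lin a b c)" by (rule deg1_irred[OF homog_lin lin_nz[OF ab]])
  have e: "lin a b c (1,0,0) = a" "lin a b c (0,1,0) = b" "lin a b c (0,0,1) = c" by (simp_all add: lin_def)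
  have m1: "1 \<le> mult_at 1 (lin a b c) (x1,y1)" by (rule mult1_ge) (use ab v1 in \<open>simp_all add: lin_def\<close>)
  have m2: "1 \<le> mult_at 1 (lin a b c) (x2,y2)" by (rule mult1_ge) (use ab v2 in \<open>simp_all add: lin_def\<close>)
  show "selfint \<alpha> (Strict 1 (lin a b c)) < 0" by (rule selfint_two[OF dist P Q PQ m1 m2])
qed

lemma line_through:
  fixes a b c x1 y1 x2 y2 :: complex
  assumes PQ: "(x1,y1) \<noteq> (x2,y2)" and e1: "c + b*y1 + a*x1 = 0" and e2: "c + b*y2 + a*x2 = 0"
  shows "\<exists>k. a = k*(y1-y2) \<and> b = k*(x2-x1) \<and> c = k*(x1*y2-x2*y1)"
proof -
  have ea: "a*(x2-x1) = b*(y1-y2)" using e1 e2 by algebra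
  show ?thesis
  proof (cases "x1 = x2")
    case False
    define k where "k = b/(x2-x1)"
    have b: "b = k*(x2-x1)" unfolding k_def using False by simp
    have a: "a = k*(y1-y2)" using ea False unfolding k_def by (simp add: field_simps)
    have c: "c = k*(x1*y2-x2*y1)" using e1 unfolding a b by algebra
    show ?thesis using a b c by blast
  next
    case True
    then have ny: "y1 \<noteq> y2" using PQ by simp
    define k where "k = a/(y1-y2)"
    have a: "a = k*(y1-y2)" unfolding k_def using ny by simp
    have b: "b = k*(x2-x1)" using ea ny True by simp
    have c: "c = k*(x1*y2-x2*y1)" using e1 unfolding a b by algebra
    show ?thesis using a b c by blast
  qed
qed

lemma line_unique:
  fixes a b c a' b' c' x1 y1 x2 y2 :: complex
  assumes PQ: "(x1,y1) \<noteq> (x2,y2)" and e1: "c + b*y1 + a*x1 = 0" and e2: "c + b*y2 + a*x2 = 0"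
    and e1': "c' + b'*y1 + a'*x1 = 0" and e2': "c' + b'*y2 + a'*x2 = 0"
    and nz: "a \<noteq> 0 \<or> b \<noteq> 0 \<or> c \<noteq> 0" and nz': "a' \<noteq> 0 \<or> b' \<noteq> 0 \<or> c' \<noteq> 0"
  shows "\<exists>k. k \<noteq> 0 \<and> a = k*a' \<and> b = k*b' \<and> c = k*c'"
proof -
  obtain k where k: "a = k*(y1-y2)" "b = k*(x2-x1)" "c = k*(x1*y2-x2*y1)"
    using line_through[OF PQ e1 e2] by blast
  obtain k' where k': "a' = k'*(y1-y2)" "b' = k'*(x2-x1)" "c' = k'*(x1*y2-x2*y1)"
    using line_through[OF PQ e1' e2'] by blast
  have "k \<noteq> 0" using nz k by auto
  moreover have "k' \<noteq> 0" using nz' k' by auto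
  ultimately show ?thesis using k k' by (intro exI[of _ "k/k'"]) auto
qed

lemma via_line:
  assumes L: "lin a' b' c' \<in> set (listed_lines \<alpha>)" and nz': "a' \<noteq> 0 \<or> b' \<noteq> 0 \<or> c' \<noteq> 0"
    and nz: "a \<noteq> 0 \<or> b \<noteq> 0 \<or> c \<noteq> 0"
    and PQ: "(x1,y1) \<noteq> (x2,y2)"
    and e1': "c' + b'*y1 + a'*x1 = 0" and e2': "c' + b'*y2 + a'*x2 = 0"
    and e1: "c + b*y1 + a*x1 = 0" and e2: "c + b*y2 + a*x2 = 0"
  shows "\<exists>L\<in>set (listed_lines \<alpha>). \<exists>k. k \<noteq> 0 \<and> Strict 1 (lin a b c) = Strict 1 (\<lambda>t. k * L t)"
proof -
  obtain k where "k \<noteq> 0" "a = k*a'" "b = k*b'" "c = k*c'"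
    using line_unique[OF PQ e1 e2 e1' e2' nz nz'] by blast
  then have "k \<noteq> 0 \<and> Strict 1 (lin a b c) = Strict 1 (\<lambda>t. k * lin a' b' c' t)"
    by (simp add: lin_scale)
  then show ?thesis using L by blast
qed

lemma bez2:
  assumes "irred_homog d f" "d \<ge> 2" "(x1,y1) \<noteq> (x2,y2)"
  shows "mult_at d f (x1,y1) + mult_at d f (x2,y2) \<le> d"
proof -
  have v: "x2 - x1 \<noteq> 0 \<or> y2 - y1 \<noteq> 0" using assms(3) by auto
  have "(\<Sum>t\<in>{0,1}. mult_at d f (x1 + t*(x2-x1), y1 + t*(y2-y1))) \<le> d"
    by (rule bezout_irred[OF assms(1,2) v]) simp
  then show ?thesis by simp
qed

lemma bez3:
  assumes "irred_homog d f" "d \<ge> 2" "v1 \<noteq> 0 \<or> v2 \<noteq> 0" "s \<noteq> 0" "s \<noteq> 1"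
  shows "mult_at d f (x0,y0) + mult_at d f (x0+v1,y0+v2) + mult_at d f (x0+s*v1,y0+s*v2) \<le> d"
proof -
  have "(\<Sum>t\<in>{0,1,s}. mult_at d f (x0 + t*v1, y0 + t*v2)) \<le> d"
    by (rule bezout_irred[OF assms(1,2,3)]) simp
  moreover have "(\<Sum>t\<in>{0,1,s}. mult_at d f (x0 + t*v1, y0 + t*v2)) =
     mult_at d f (x0,y0) + (mult_at d f (x0+v1,y0+v2) + mult_at d f (x0+s*v1,y0+s*v2))"
    using assms(4,5) by (simp add: insert_commute)
  ultimately show ?thesis by simp
qed

lemma high_degree:
  assumes a0: "\<alpha> \<noteq> 0" and a1: "\<alpha> \<noteq> 1" and irr: "irred_homog d f" and d2: "d \<ge> 2"
  shows "selfint \<alpha> (Strict d f) \<ge> 0"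
proof -
  have i1: "\<i> \<noteq> -\<i>" by (simp add: complex_eq_iff)
  have i2: "\<alpha>*\<i> \<noteq> -(\<alpha>*\<i>)"
  proof
    assume "\<alpha>*\<i> = -(\<alpha>*\<i>)"
    then have "2*(\<alpha>*\<i>) = 0" by simp
    then show False using a0 by simp
  qed
  let ?m = "mult_at d f"
  have L1: "?m (0,0) + ?m (1,\<i>) + ?m (\<alpha>,\<alpha>*\<i>) \<le> d"
    using bez3[OF irr d2, of 1 \<i> \<alpha> 0 0] a0 a1 by simp
  have L2: "?m (0,0) + ?m (1,-\<i>) + ?m (\<alpha>,-\<alpha>*\<i>) \<le> d"
    using bez3[OF irr d2, of 1 "-\<i>" \<alpha> 0 0] a0 a1 by simp
  have L3: "?m (1,\<i>) + ?m (1,-\<i>) \<le> d" using bez2[OF irr d2] i1 by simp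
  have L4: "?m (\<alpha>,\<alpha>*\<i>) + ?m (\<alpha>,-\<alpha>*\<i>) \<le> d" using bez2[OF irr d2] i2 by simp
  have L5: "?m (\<alpha>,\<alpha>*\<i>) + ?m (1,-\<i>) \<le> d" using bez2[OF irr d2] a1 by simp
  have L6: "?m (1,\<i>) + ?m (\<alpha>,-\<alpha>*\<i>) \<le> d" using bez2[OF irr d2] a1 by simp
  have "(int (?m (0,0)))^2 + (int (?m (1,\<i>)))^2 + (int (?m (\<alpha>,\<alpha>*\<i>)))^2 + (int (?m (1,-\<i>)))^2
        + (int (?m (\<alpha>,-\<alpha>*\<i>)))^2 \<le> (int d)^2"
    by (rule numineq) (use L1 L2 L3 L4 L5 L6 in linarith)+
  then show ?thesis unfolding selfint_def bpts_def by simp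
qed

theorem lemma6p1:
  fixes \<alpha> :: complex and C :: curveY
  assumes "\<alpha> \<noteq> 0" and "\<alpha> \<noteq> 1"
  shows "(irreducible_curveY \<alpha> C \<and> selfint \<alpha> C < 0) \<longleftrightarrow>
         ((\<exists>P\<in>set (bpts \<alpha>). C = Exc P) \<or>
          (\<exists>L\<in>set (listed_lines \<alpha>). \<exists>c::complex. c \<noteq> 0 \<and> C = Strict 1 (\<lambda>t. c * L t)))"
proof (cases C)
  case (Exc P)
  then show ?thesis by (auto simp: irreducible_curveY_def selfint_def)
next
  case (Strict d f)
  have a0: "\<alpha> \<noteq> 0" and a1: "\<alpha> \<noteq> 1" by fact+
  have dist: "distinct (bpts \<alpha>)" by (rule distinct_bpts[OF a0 a1])
  have i1: "\<i> \<noteq> -\<i>" by (simp add: complex_eq_iff)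
  have i2: "\<alpha>*\<i> \<noteq> -(\<alpha>*\<i>)"
  proof
    assume "\<alpha>*\<i> = -(\<alpha>*\<i>)"
    then have "2*(\<alpha>*\<i>) = 0" by simp
    then show False using a0 by simp
  qed
  have a1': "\<alpha> + 1 \<noteq> 0 \<or> (\<alpha> - 1) * \<i> \<noteq> 0" using a1 by simp
  have a1'': "\<alpha> + 1 \<noteq> 0 \<or> -((\<alpha> - 1) * \<i>) \<noteq> 0" using a1 by simp
  show ?thesis
  proof
    assume H: "irreducible_curveY \<alpha> C \<and> selfint \<alpha> C < 0"
    then have irr: "irred_homog d f" and neg: "selfint \<alpha> (Strict d f) < 0"
      using Strict by (auto simp: irreducible_curveY_def)
    have d1: "d \<ge> 1" using irr unfolding irred_homog_def by simp
    have "\<not> d \<ge> 2" using high_degree[OF a0 a1 irr] neg by force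
    with d1 have d: "d = 1" by simp
    have hf: "homog 1 f" and nz: "f \<noteq> (\<lambda>_. 0)" using irr d unfolding irred_homog_def by auto
    define a where "a = f (1,0,0)"
    define b where "b = f (0,1,0)"
    define c where "c = f (0,0,1)"
    have fl: "f = lin a b c" unfolding a_def b_def c_def by (rule homog1_lin[OF hf])
    have abc: "a \<noteq> 0 \<or> b \<noteq> 0 \<or> c \<noteq> 0"
    proof (rule ccontr)
      assume "\<not> ?thesis"
      then have "f = lin 0 0 0" using fl by simp
      moreover have "lin 0 0 0 = (\<lambda>_. 0)" by (rule ext) (simp add: lin_def)
      ultimately show False using nz by simp
    qed
    let ?m = "\<lambda>P. mult_at 1 f P"
    have mle: "?m P \<le> 1" for P using mult1_le[OF hf nz] by (cases P) auto
    have V: "?m (x,y) \<noteq> 0 \<Longrightarrow> c + b*y + a*x = 0" for x y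
      using mult1_nz[of f x y] unfolding a_def b_def c_def by simp
    have sq: "int (?m P) ^ 2 = int (?m P)" for P
    proof -
      have "?m P = 0 \<or> ?m P = 1" using mle[of P] by auto
      then show ?thesis by auto
    qed
    have "1 < int (?m (0,0)) + int (?m (1,\<i>)) + int (?m (\<alpha>,\<alpha>*\<i>)) + int (?m (1,-\<i>)) + int (?m (\<alpha>,-\<alpha>*\<i>))"
      using neg d unfolding selfint_def bpts_def by (simp add: sq sq[unfolded One_nat_def])
    then have pairs: "(?m (0,0) \<noteq> 0 \<and> ?m (1,\<i>) \<noteq> 0) \<or> (?m (0,0) \<noteq> 0 \<and> ?m (\<alpha>,\<alpha>*\<i>) \<noteq> 0) \<or>
      (?m (1,\<i>) \<noteq> 0 \<and> ?m (\<alpha>,\<alpha>*\<i>) \<noteq> 0) \<or>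
      (?m (0,0) \<noteq> 0 \<and> ?m (1,-\<i>) \<noteq> 0) \<or> (?m (0,0) \<noteq> 0 \<and> ?m (\<alpha>,-\<alpha>*\<i>) \<noteq> 0) \<or>
      (?m (1,-\<i>) \<noteq> 0 \<and> ?m (\<alpha>,-\<alpha>*\<i>) \<noteq> 0) \<or>
      (?m (1,\<i>) \<noteq> 0 \<and> ?m (1,-\<i>) \<noteq> 0) \<or> (?m (\<alpha>,\<alpha>*\<i>) \<noteq> 0 \<and> ?m (\<alpha>,-\<alpha>*\<i>) \<noteq> 0) \<or>
      (?m (\<alpha>,\<alpha>*\<i>) \<noteq> 0 \<and> ?m (1,-\<i>) \<noteq> 0) \<or> (?m (1,\<i>) \<noteq> 0 \<and> ?m (\<alpha>,-\<alpha>*\<i>) \<noteq> 0)"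
      using mle[of "(0,0)"] mle[of "(1,\<i>)"] mle[of "(\<alpha>,\<alpha>*\<i>)"] mle[of "(1,-\<i>)"] mle[of "(\<alpha>,-\<alpha>*\<i>)"]
      by linarith
    have VL: "\<And>a' b' c' x1 y1 x2 y2. lin a' b' c' \<in> set (listed_lines \<alpha>) \<Longrightarrow> (a' \<noteq> 0 \<or> b' \<noteq> 0 \<or> c' \<noteq> 0) \<Longrightarrow>
       (x1,y1) \<noteq> (x2,y2) \<Longrightarrow> c' + b'*y1 + a'*x1 = 0 \<Longrightarrow> c' + b'*y2 + a'*x2 = 0 \<Longrightarrow>
       ?m (x1,y1) \<noteq> 0 \<Longrightarrow> ?m (x2,y2) \<noteq> 0 \<Longrightarrow>
       (\<exists>L\<in>set (listed_lines \<alpha>). \<exists>k. k \<noteq> 0 \<and> C = Strict 1 (\<lambda>t. k * L t))"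
    proof -
      fix a' b' c' x1 y1 x2 y2
      assume h1: "lin a' b' c' \<in> set (listed_lines \<alpha>)" and h2: "a' \<noteq> 0 \<or> b' \<noteq> 0 \<or> c' \<noteq> 0"
        and h3: "(x1,y1) \<noteq> (x2,y2)" and h4: "c' + b'*y1 + a'*x1 = 0" and h5: "c' + b'*y2 + a'*x2 = 0"
        and h6: "?m (x1,y1) \<noteq> 0" and h7: "?m (x2,y2) \<noteq> 0"
      have "\<exists>L\<in>set (listed_lines \<alpha>). \<exists>k. k \<noteq> 0 \<and> Strict 1 (lin a b c) = Strict 1 (\<lambda>t. k * L t)"
        by (rule via_line[OF h1 h2 abc h3 h4 h5 V[OF h6] V[OF h7]])
      then show "\<exists>L\<in>set (listed_lines \<alpha>). \<exists>k. k \<noteq> 0 \<and> C = Strict 1 (\<lambda>t. k * L t)"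
        using Strict d fl by simp
    qed
    have LL: "lin 1 \<i> 0 \<in> set (listed_lines \<alpha>)" "lin 1 (-\<i>) 0 \<in> set (listed_lines \<alpha>)"
      "lin 1 0 (-1) \<in> set (listed_lines \<alpha>)" "lin 1 0 (-\<alpha>) \<in> set (listed_lines \<alpha>)"
      "lin (\<alpha>+1) ((\<alpha>-1)*\<i>) (-2*\<alpha>) \<in> set (listed_lines \<alpha>)"
      "lin (\<alpha>+1) (-(\<alpha>-1)*\<i>) (-2*\<alpha>) \<in> set (listed_lines \<alpha>)"
      unfolding listed_lines_def by simp_all
    have "\<exists>L\<in>set (listed_lines \<alpha>). \<exists>k. k \<noteq> 0 \<and> C = Strict 1 (\<lambda>t. k * L t)"
      using pairs
    proof (elim disjE conjE)
      assume "?m (0,0) \<noteq> 0" "?m (1,\<i>) \<noteq> 0"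
      then show ?thesis by - (rule VL[OF LL(1), of 0 0 1 \<i>], (simp_all add: algebra_simps))
    next
      assume "?m (0,0) \<noteq> 0" "?m (\<alpha>,\<alpha>*\<i>) \<noteq> 0"
      then show ?thesis using a0 by - (rule VL[OF LL(1), of 0 0 \<alpha> "\<alpha>*\<i>"], (simp_all add: algebra_simps))
    next
      assume "?m (1,\<i>) \<noteq> 0" "?m (\<alpha>,\<alpha>*\<i>) \<noteq> 0"
      then show ?thesis using a1 by - (rule VL[OF LL(1), of 1 \<i> \<alpha> "\<alpha>*\<i>"], (simp_all add: algebra_simps))
    next
      assume "?m (0,0) \<noteq> 0" "?m (1,-\<i>) \<noteq> 0"
      then show ?thesis by - (rule VL[OF LL(2), of 0 0 1 "-\<i>"], (simp_all add: algebra_simps))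
    next
      assume "?m (0,0) \<noteq> 0" "?m (\<alpha>,-\<alpha>*\<i>) \<noteq> 0"
      then show ?thesis using a0 by - (rule VL[OF LL(2), of 0 0 \<alpha> "-\<alpha>*\<i>"], (simp_all add: algebra_simps))
    next
      assume "?m (1,-\<i>) \<noteq> 0" "?m (\<alpha>,-\<alpha>*\<i>) \<noteq> 0"
      then show ?thesis using a1 by - (rule VL[OF LL(2), of 1 "-\<i>" \<alpha> "-\<alpha>*\<i>"], (simp_all add: algebra_simps))
    next
      assume "?m (1,\<i>) \<noteq> 0" "?m (1,-\<i>) \<noteq> 0"
      then show ?thesis using i1 by - (rule VL[OF LL(3), of 1 \<i> 1 "-\<i>"], (simp_all add: algebra_simps))
    next
      assume "?m (\<alpha>,\<alpha>*\<i>) \<noteq> 0" "?m (\<alpha>,-\<alpha>*\<i>) \<noteq> 0"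
      then show ?thesis using i2 by - (rule VL[OF LL(4), of \<alpha> "\<alpha>*\<i>" \<alpha> "-\<alpha>*\<i>"], (simp_all add: algebra_simps))
    next
      assume "?m (\<alpha>,\<alpha>*\<i>) \<noteq> 0" "?m (1,-\<i>) \<noteq> 0"
      then show ?thesis using a1 a1' by - (rule VL[OF LL(5), of \<alpha> "\<alpha>*\<i>" 1 "-\<i>"], (simp_all add: algebra_simps))
    next
      assume "?m (1,\<i>) \<noteq> 0" "?m (\<alpha>,-\<alpha>*\<i>) \<noteq> 0"
      then show ?thesis using a1 a1'' by - (rule VL[OF LL(6), of 1 \<i> \<alpha> "-\<alpha>*\<i>"], (simp_all add: algebra_simps))
    qed
    then show "(\<exists>P\<in>set (bpts \<alpha>). C = Exc P) \<or>
          (\<exists>L\<in>set (listed_lines \<alpha>). \<exists>c::complex. c \<noteq> 0 \<and> C = Strict 1 (\<lambda>t. c * L t))" by blast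
  next
    assume "(\<exists>P\<in>set (bpts \<alpha>). C = Exc P) \<or>
          (\<exists>L\<in>set (listed_lines \<alpha>). \<exists>c::complex. c \<noteq> 0 \<and> C = Strict 1 (\<lambda>t. c * L t))"
    then obtain L k where L: "L \<in> set (listed_lines \<alpha>)" and k: "k \<noteq> 0" and CS: "C = Strict 1 (\<lambda>t. k * L t)"
      using Strict by auto
    have "irred_homog 1 (\<lambda>t. k * L t) \<and> selfint \<alpha> (Strict 1 (\<lambda>t. k * L t)) < 0"
      using L unfolding listed_lines_def
    proof (simp only: set_simps insert_iff empty_iff, elim disjE)
      assume LX: "L = lin 1 \<i> 0"
      show ?thesis unfolding LX lin_scale
        by (rule line_good[OF dist, of _ _ 0 0 1 \<i>]) (use k in \<open>simp_all add: bpts_def algebra_simps\<close>)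
    next
      assume LX: "L = lin 1 (-\<i>) 0"
      show ?thesis unfolding LX lin_scale
        by (rule line_good[OF dist, of _ _ 0 0 1 "-\<i>"]) (use k in \<open>simp_all add: bpts_def algebra_simps\<close>)
    next
      assume LX: "L = lin 1 0 (-1)"
      show ?thesis unfolding LX lin_scale
        by (rule line_good[OF dist, of _ _ 1 \<i> 1 "-\<i>"]) (use k i1 in \<open>simp_all add: bpts_def algebra_simps\<close>)
    next
      assume LX: "L = lin (\<alpha>+1) ((\<alpha>-1)*\<i>) (-2*\<alpha>)"
      show ?thesis unfolding LX lin_scale
        by (rule line_good[OF dist, of _ _ \<alpha> "\<alpha>*\<i>" 1 "-\<i>"]) (use k a1 a1' in \<open>simp_all add: bpts_def algebra_simps\<close>)
    next
      assume LX: "L = lin (\<alpha>+1) (-(\<alpha>-1)*\<i>) (-2*\<alpha>)"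
      show ?thesis unfolding LX lin_scale
        by (rule line_good[OF dist, of _ _ 1 \<i> \<alpha> "-\<alpha>*\<i>"]) (use k a1 a1'' in \<open>simp_all add: bpts_def algebra_simps\<close>)
    next
      assume LX: "L = lin 1 0 (-\<alpha>)"
      show ?thesis unfolding LX lin_scale
        by (rule line_good[OF dist, of _ _ \<alpha> "\<alpha>*\<i>" \<alpha> "-\<alpha>*\<i>"]) (use k i2 in \<open>simp_all add: bpts_def algebra_simps\<close>)
    next
      assume False then show ?thesis by simp
    qed
    then show "irreducible_curveY \<alpha> C \<and> selfint \<alpha> C < 0"
      unfolding CS irreducible_curveY_def by simp
  qed
qed

end
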